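(* Let $\Gamma$ be a propositional theory and $Q$ a set of atoms such that every positive occurrence in $\Gamma$ of an atom from $Q$ is in the scope of negation. For each $q\in Q$ let $Def(q)$ be a formula such that every negative occurrence in $Def(q)$ of an atom from $Q$ is in the scope of negation. Then $\Gamma\cup\{Def(q)\to q:q\in Q\}$ and $\Gamma\cup\{Def(q)\leftrightarrow q:q\in Q\}$ have the same stable models.
   Context: Formulas are built from atoms and $\bot$ using $\wedge,\vee,\to$; $\top$, $\neg F$ and $F\leftrightarrow G$ abbreviate $\bot\to\bot$, $F\to\bot$ and $(F\to G)\wedge(G\to F)$. Reduct: $\bot^X=\bot$; $a^X=a$ if $a\in X$, else $\bot$; $(F\otimes G)^X=F^X\otimes G^X$ if $X\models F\otimes G$, else $\bot$; $\Gamma^X=\{F^X:F\in\Gamma\}$. $X$ is a stable model of $\Gamma$ if $X\models\Gamma^X$ and no proper subset of $X$ satisfies $\Gamma^X$. An occurrence of an atom in a formula (with abbreviations expanded) is positive if it is in the antecedent of an even number of implications and negative if odd. An occurrence is in the scope of negation if it occurs inside a subformula of the form $\neg F$, i.e. $F\to\bot$. *)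

theory Defs
  imports Main
begin

datatype 'a form = Bot | Atom 'a | And "'a form" "'a form" | Or "'a form" "'a form"
  | Imp "'a form" "'a form"

definition Top :: "'a form" where "Top = Imp Bot Bot"
definition Neg :: "'a form \<Rightarrow> 'a form" where "Neg F = Imp F Bot"
definition Iff :: "'a form \<Rightarrow> 'a form \<Rightarrow> 'a form" where
  "Iff F G = And (Imp F G) (Imp G F)"

fun sat :: "'a set \<Rightarrow> 'a form \<Rightarrow> bool" where
  "sat X Bot = False"
| "sat X (Atom a) = (a \<in> X)"
| "sat X (And F G) = (sat X F \<and> sat X G)"
| "sat X (Or F G) = (sat X F \<or> sat X G)"
| "sat X (Imp F G) = (sat X F \<longrightarrow> sat X G)"

definition sats :: "'a set \<Rightarrow> 'a form set \<Rightarrow> bool" where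
  "sats X \<Gamma> = (\<forall>F\<in>\<Gamma>. sat X F)"

fun reduct :: "'a form \<Rightarrow> 'a set \<Rightarrow> 'a form" where
  "reduct Bot X = Bot"
| "reduct (Atom a) X = (if a \<in> X then Atom a else Bot)"
| "reduct (And F G) X = (if sat X (And F G) then And (reduct F X) (reduct G X) else Bot)"
| "reduct (Or F G) X = (if sat X (Or F G) then Or (reduct F X) (reduct G X) else Bot)"
| "reduct (Imp F G) X = (if sat X (Imp F G) then Imp (reduct F X) (reduct G X) else Bot)"

definition reduct_set :: "'a form set \<Rightarrow> 'a set \<Rightarrow> 'a form set" where
  "reduct_set \<Gamma> X = (\<lambda>F. reduct F X) ` \<Gamma>"

definition stable_model :: "'a set \<Rightarrow> 'a form set \<Rightarrow> bool" where
  "stable_model X \<Gamma> = (sats X (reduct_set \<Gamma> X) \<and>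
     \<not> (\<exists>Y. Y \<subset> X \<and> sats Y (reduct_set \<Gamma> X)))"

(* occurrences of atoms: (atom, positive?, in scope of negation?)
   positive = in the antecedent of an even number of implications;
   in scope of negation = inside the antecedent F of some subformula F \<rightarrow> Bot *)
fun occs :: "'a form \<Rightarrow> ('a \<times> bool \<times> bool) set" where
  "occs Bot = {}"
| "occs (Atom a) = {(a, True, False)}"
| "occs (And F G) = occs F \<union> occs G"
| "occs (Or F G) = occs F \<union> occs G"
| "occs (Imp F G) = (\<lambda>(a, p, n). (a, \<not> p, n \<or> G = Bot)) ` occs F \<union> occs G"

end

theory Submission
  imports Defs
begin

lemma red_self: "sat X (reduct F X) = sat X F"
  by (induction F) auto
lemma red_sub: "W \<subseteq> X \<Longrightarrow> sat W (reduct F X) \<Longrightarrow> sat X F"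
  by (cases F) (auto split: if_splits)

definition posQ :: "'a set \<Rightarrow> 'a form \<Rightarrow> bool" where
  "posQ Q F = (\<forall>(a,p,n)\<in>occs F. a\<in>Q \<and> p \<longrightarrow> n)"
definition negQ :: "'a set \<Rightarrow> 'a form \<Rightarrow> bool" where
  "negQ Q F = (\<forall>(a,p,n)\<in>occs F. a\<in>Q \<and> \<not>p \<longrightarrow> n)"

lemma bimg: "(\<forall>x\<in>f ` A. P x) = (\<forall>x\<in>A. P (f x))" by blast

lemma posQ_And: "posQ Q (And F G) = (posQ Q F \<and> posQ Q G)"
  and negQ_And: "negQ Q (And F G) = (negQ Q F \<and> negQ Q G)"
  and posQ_Or: "posQ Q (Or F G) = (posQ Q F \<and> posQ Q G)"
  and negQ_Or: "negQ Q (Or F G) = (negQ Q F \<and> negQ Q G)"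
  unfolding posQ_def negQ_def by (simp_all only: occs.simps ball_Un)

lemma cc: "(case (case x of (a, p, n) \<Rightarrow> (a, \<not> p, n)) of (a, p, m) \<Rightarrow> P a p m) = (case x of (a, p, m) \<Rightarrow> P a (\<not>p) m)"
  by (cases x) auto

lemma posQ_Imp: "G \<noteq> Bot \<Longrightarrow> posQ Q (Imp F G) = (negQ Q F \<and> posQ Q G)"
  and negQ_Imp: "G \<noteq> Bot \<Longrightarrow> negQ Q (Imp F G) = (posQ Q F \<and> negQ Q G)"
  unfolding posQ_def negQ_def by (simp_all add: ball_Un bimg cc)

lemma posQ_Atom: "posQ Q (Atom a) = (a \<notin> Q)"
  unfolding posQ_def by simp
lemma satr_And: "sat W (reduct (And F G) X) = (sat X (And F G) \<and> sat W (reduct F X) \<and> sat W (reduct G X))"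
  and satr_Or: "sat W (reduct (Or F G) X) = (sat X (Or F G) \<and> (sat W (reduct F X) \<or> sat W (reduct G X)))"
  and satr_Imp: "sat W (reduct (Imp F G) X) = (sat X (Imp F G) \<and> (sat W (reduct F X) \<longrightarrow> sat W (reduct G X)))"
  by auto

lemma mono_red:
  assumes "Z \<subseteq> Y" "Y \<subseteq> X" "Y - Z \<subseteq> Q"
  shows "(posQ Q F \<longrightarrow> sat Y (reduct F X) \<longrightarrow> sat Z (reduct F X)) \<and>
         (negQ Q F \<longrightarrow> sat Z (reduct F X) \<longrightarrow> sat Y (reduct F X))"
proof (induction F)
  case Bot then show ?case by simp
next
  case (Atom a) then show ?case using assms by (auto simp: posQ_Atom)
next
  case (And F G) then show ?case unfolding posQ_And negQ_And satr_And
    by blast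
next
  case (Or F G) then show ?case unfolding posQ_Or negQ_Or satr_Or
    by blast
next
  case (Imp F G)
  show ?case
  proof (cases "G = Bot")
    case True
    have e: "sat W (reduct (Imp F G) X) = (\<not> sat X F)" if "W \<subseteq> X" for W
    proof -
      have "sat W (reduct F X) \<Longrightarrow> sat X F" using red_sub[OF that] .
      then show ?thesis unfolding True satr_Imp reduct.simps(1) sat.simps(1,5) by blast
    qed
    have ZX: "Z \<subseteq> X" using assms by blast
    show ?thesis unfolding e[OF assms(2)] e[OF ZX] by blast
  next
    case False
    show ?thesis unfolding posQ_Imp[OF False] negQ_Imp[OF False] satr_Imp using Imp.IH
      by blast
  qed
qed

lemma sats_red: "sats Y (reduct_set G X) = (\<forall>F\<in>G. sat Y (reduct F X))"
  unfolding sats_def reduct_set_def by auto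


theorem proposition9:
  fixes \<Gamma> :: "'a form set" and Q :: "'a set" and Def :: "'a \<Rightarrow> 'a form"
  assumes "\<forall>F\<in>\<Gamma>. \<forall>(a, p, n)\<in>occs F. a \<in> Q \<and> p \<longrightarrow> n"
    and "\<forall>q\<in>Q. \<forall>(a, p, n)\<in>occs (Def q). a \<in> Q \<and> \<not> p \<longrightarrow> n"
  shows "{X. stable_model X (\<Gamma> \<union> {Imp (Def q) (Atom q) | q. q \<in> Q})}
       = {X. stable_model X (\<Gamma> \<union> {Iff (Def q) (Atom q) | q. q \<in> Q})}"
proof -
  have P1: "\<forall>F\<in>\<Gamma>. posQ Q F" using assms(1) unfolding posQ_def .
  have P2: "\<forall>q\<in>Q. negQ Q (Def q)" using assms(2) unfolding negQ_def .
  show ?thesis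
proof (rule set_eqI, unfold mem_Collect_eq, rule iffI)
  fix X
  assume st: "stable_model X (\<Gamma> \<union> {Imp (Def q) (Atom q) | q. q \<in> Q})"
  have all: "\<forall>F\<in>\<Gamma> \<union> {Imp (Def q) (Atom q) | q. q \<in> Q}. sat X F"
    using st unfolding stable_model_def sats_red by (simp add: red_self)
  have X1: "\<forall>F\<in>\<Gamma>. sat X (reduct F X)" using all by (simp add: red_self)
  have X2: "\<forall>q\<in>Q. sat X (Def q) \<longrightarrow> q \<in> X"
  proof (intro ballI impI)
    fix q assume "q \<in> Q" "sat X (Def q)"
    then show "q \<in> X" using all[rule_format, of "Imp (Def q) (Atom q)"] by auto
  qed
  have min: "\<not> (\<exists>Y. Y \<subset> X \<and> (\<forall>F\<in>\<Gamma> \<union> {Imp (Def q) (Atom q) | q. q \<in> Q}. sat Y (reduct F X)))"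
    using st unfolding stable_model_def sats_red by blast
  have X3: "sat X (Def q)" if q: "q \<in> Q" "q \<in> X" for q
  proof (rule ccontr)
    assume nd: "\<not> sat X (Def q)"
    define Y where "Y = X - {q}"
    have "Y \<subset> X" using q Y_def by auto
    moreover have "\<forall>F\<in>\<Gamma>. sat Y (reduct F X)"
    proof
      fix F assume F: "F \<in> \<Gamma>"
      have "Y \<subseteq> X" "X - Y \<subseteq> Q" using q unfolding Y_def by auto
      then show "sat Y (reduct F X)" using mono_red[of Y X X Q F] X1 P1 F by blast
    qed
    moreover have "sat Y (reduct (Imp (Def r) (Atom r)) X)" if "r \<in> Q" for r
    proof -
      have "sat Y (reduct (Def r) X) \<Longrightarrow> r \<in> Y"
      proof -
        assume h: "sat Y (reduct (Def r) X)"
        then have "sat X (Def r)" using red_sub[of Y X] Y_def by auto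
        then show "r \<in> Y" using nd X2 that Y_def by auto
      qed
      then show ?thesis using X2 that Y_def by auto
    qed
    ultimately show False using min by blast
  qed
  show "stable_model X (\<Gamma> \<union> {Iff (Def q) (Atom q) | q. q \<in> Q})"
    unfolding stable_model_def sats_red
  proof (intro conjI notI)
    show "\<forall>F\<in>\<Gamma> \<union> {Iff (Def q) (Atom q) |q. q \<in> Q}. sat X (reduct F X)"
    proof
      fix F assume "F \<in> \<Gamma> \<union> {Iff (Def q) (Atom q) |q. q \<in> Q}"
      then consider "F \<in> \<Gamma>" | q where "q \<in> Q" "F = Iff (Def q) (Atom q)" by blast
      then show "sat X (reduct F X)"
      proof cases
        case 1 then show ?thesis using X1 by blast
      next
        case 2 then show ?thesis using X2 X3 by (simp add: red_self Iff_def)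
      qed
    qed
  next
    assume "\<exists>Y\<subset>X. \<forall>F\<in>\<Gamma> \<union> {Iff (Def q) (Atom q) |q. q \<in> Q}. sat Y (reduct F X)"
    then obtain Y where "Y \<subset> X" "\<forall>F\<in>\<Gamma> \<union> {Iff (Def q) (Atom q) |q. q \<in> Q}. sat Y (reduct F X)"
      by blast
    moreover have "sat Y (reduct (Imp (Def q) (Atom q)) X)" if "q \<in> Q" "sat Y (reduct (Iff (Def q) (Atom q)) X)" for q
      using that(2) unfolding Iff_def by (simp split: if_splits)
    ultimately have "Y \<subset> X \<and> (\<forall>F\<in>\<Gamma> \<union> {Imp (Def q) (Atom q) | q. q \<in> Q}. sat Y (reduct F X))"
      by blast
    then show False using min by blast
  qed
next
  fix X
  assume st: "stable_model X (\<Gamma> \<union> {Iff (Def q) (Atom q) | q. q \<in> Q})"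
  have all: "\<forall>F\<in>\<Gamma> \<union> {Iff (Def q) (Atom q) | q. q \<in> Q}. sat X F"
    using st unfolding stable_model_def sats_red by (simp add: red_self)
  have X1: "\<forall>F\<in>\<Gamma>. sat X (reduct F X)" using all by (simp add: red_self)
  have X2: "\<forall>q\<in>Q. sat X (Def q) = (q \<in> X)"
  proof (intro ballI)
    fix q assume "q \<in> Q"
    then show "sat X (Def q) = (q \<in> X)" using all[rule_format, of "Iff (Def q) (Atom q)"] by (auto simp: Iff_def)
  qed
  have min: "\<not> (\<exists>Y. Y \<subset> X \<and> (\<forall>F\<in>\<Gamma> \<union> {Iff (Def q) (Atom q) | q. q \<in> Q}. sat Y (reduct F X)))"
    using st unfolding stable_model_def sats_red by blast
  show "stable_model X (\<Gamma> \<union> {Imp (Def q) (Atom q) | q. q \<in> Q})"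
    unfolding stable_model_def sats_red
  proof (intro conjI notI)
    show "\<forall>F\<in>\<Gamma> \<union> {Imp (Def q) (Atom q) |q. q \<in> Q}. sat X (reduct F X)"
    proof
      fix F assume "F \<in> \<Gamma> \<union> {Imp (Def q) (Atom q) |q. q \<in> Q}"
      then consider "F \<in> \<Gamma>" | q where "q \<in> Q" "F = Imp (Def q) (Atom q)" by blast
      then show "sat X (reduct F X)"
      proof cases
        case 1 then show ?thesis using X1 by blast
      next
        case 2 then show ?thesis using X2 by (simp add: red_self)
      qed
    qed
  next
    assume "\<exists>Y\<subset>X. \<forall>F\<in>\<Gamma> \<union> {Imp (Def q) (Atom q) |q. q \<in> Q}. sat Y (reduct F X)"
    then obtain Y where YX: "Y \<subset> X" and Y1: "\<forall>F\<in>\<Gamma>. sat Y (reduct F X)"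
      and Y2: "\<forall>q\<in>Q. sat Y (reduct (Imp (Def q) (Atom q)) X)"
      by blast
    define W where "W S = (Y - Q) \<union> (S \<inter> Q \<inter> X)" for S
    define f where "f S = {q \<in> Q \<inter> X. sat (W S) (reduct (Def q) X)}" for S
    have WX: "W S \<subseteq> X" for S using YX W_def by auto
    have mf: "mono f"
    proof (rule monoI)
      fix S T :: "'a set" assume "S \<subseteq> T"
      then have "W S \<subseteq> W T" "W T - W S \<subseteq> Q" unfolding W_def by auto
      then show "f S \<subseteq> f T" unfolding f_def
        using mono_red[of "W S" "W T" X Q] WX P2 by blast
    qed
    define S where "S = lfp f"
    have Sfix: "S = f S" unfolding S_def using mf lfp_unfold by blast
    have WY: "W (Y \<inter> Q) = Y" using YX unfolding W_def by auto
    have "f (Y \<inter> Q) \<subseteq> Y \<inter> Q"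
    proof
      fix q assume "q \<in> f (Y \<inter> Q)"
      then have "q \<in> Q" "q \<in> X" "sat Y (reduct (Def q) X)" unfolding f_def WY by auto
      then show "q \<in> Y \<inter> Q" using Y2 by (auto split: if_splits)
    qed
    then have SY: "S \<subseteq> Y \<inter> Q" unfolding S_def by (rule lfp_lowerbound)
    define Y' where "Y' = W S"
    have fsub: "f T \<subseteq> Q \<inter> X" for T unfolding f_def by blast
    have SQ: "S \<subseteq> Q \<inter> X" by (subst Sfix) (rule fsub)
    have Y'Y: "Y' \<subseteq> Y" "Y - Y' \<subseteq> Q" using SY YX unfolding Y'_def W_def by auto
    have "Y' \<subset> X" using Y'Y YX by auto
    moreover have "\<forall>F\<in>\<Gamma>. sat Y' (reduct F X)"
    proof
      fix F assume F: "F \<in> \<Gamma>"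
      have "Y \<subseteq> X" using YX by auto
      then show "sat Y' (reduct F X)" using mono_red[of Y' Y X Q F] Y1 P1 F Y'Y by blast
    qed
    moreover have "sat Y' (reduct (Iff (Def q) (Atom q)) X)" if q: "q \<in> Q" for q
    proof (cases "q \<in> X")
      case True
      have "(q \<in> Y') = (q \<in> S)" using q SQ unfolding Y'_def W_def by auto
      also have "\<dots> = sat Y' (reduct (Def q) X)"
        using q True by (subst Sfix) (simp add: f_def Y'_def)
      finally show ?thesis using X2 q True by (auto simp: Iff_def)
    next
      case False
      then have "\<not> sat Y' (reduct (Def q) X)"
        using X2 q red_sub[of Y' X] \<open>Y' \<subset> X\<close> by auto
      then show ?thesis using X2 q False by (auto simp: Iff_def)
    qed
    ultimately show False using min by blast
  qed
qed
qed

end
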